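(* Let ${\tt G}$ be a connected digraph with exactly $n$ edges. If the path poset $P({\tt G})$ has a maximum, then $P({\tt G})\cong\mathbb B(n)$ as posets and ${\tt G}\cong{\tt I}_n$. In particular, a connected digraph has a Boolean path poset if and only if it is isomorphic to ${\tt I}_n$ for some $n$.
   Context: A digraph ${\tt G}=(V,E)$ has finite $V$ and $E\subseteq (V\times V)\setminus\{(v,v)\}$; connected means the underlying undirected graph is connected; isomorphism is an isomorphism in the category of digraphs with injective edge-preserving vertex maps. A multipath of ${\tt G}$ is a spanning subgraph (all vertices, subset of edges) each of whose components is an isolated vertex or a simple directed path (edges $e_1,\dots,e_k$ with target of $e_i$ equal to source of $e_{i+1}$, no repeated vertex, not a cycle); the path poset $P({\tt G})$ is the set of multipaths ordered by inclusion of edge sets. $\mathbb B(n)$ is the power set of $\{0,\dots,n-1\}$ ordered by inclusion; a Boolean poset is one isomorphic to the power set of a finite set. ${\tt I}_n$ is the digraph with vertices $v_0,\dots,v_n$ and edges $(v_{i-1},v_i)$, $i=1,\dots,n$. *)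

theory Defs
  imports Main
begin

definition digraph :: "'a set \<Rightarrow> ('a \<times> 'a) set \<Rightarrow> bool" where
  "digraph V E \<longleftrightarrow> finite V \<and> E \<subseteq> V \<times> V \<and> (\<forall>v. (v, v) \<notin> E)"

definition connected_digraph :: "'a set \<Rightarrow> ('a \<times> 'a) set \<Rightarrow> bool" where
  "connected_digraph V E \<longleftrightarrow> V \<noteq> {} \<and> (\<forall>u\<in>V. \<forall>v\<in>V. (u, v) \<in> (E \<union> E\<inverse>)\<^sup>*)"

definition component :: "'a set \<Rightarrow> ('a \<times> 'a) set \<Rightarrow> 'a \<Rightarrow> 'a set" where
  "component V F u = {v \<in> V. (u, v) \<in> (F \<union> F\<inverse>)\<^sup>*}"

text \<open>The subgraph of (V,F) on vertex set C is an isolated vertex (list of length 1)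
  or a simple directed path through the distinct vertices vs.\<close>
definition path_component :: "'a set \<Rightarrow> ('a \<times> 'a) set \<Rightarrow> bool" where
  "path_component C F \<longleftrightarrow>
     (\<exists>vs. vs \<noteq> [] \<and> distinct vs \<and> set vs = C \<and>
        {(a, b) \<in> F. a \<in> C \<and> b \<in> C} = set (zip vs (tl vs)))"

definition multipath :: "'a set \<Rightarrow> ('a \<times> 'a) set \<Rightarrow> ('a \<times> 'a) set \<Rightarrow> bool" where
  "multipath V E F \<longleftrightarrow> F \<subseteq> E \<and> (\<forall>u\<in>V. path_component (component V F u) F)"

text \<open>Path poset: multipaths (identified with their edge sets), ordered by inclusion.\<close>
definition path_poset :: "'a set \<Rightarrow> ('a \<times> 'a) set \<Rightarrow> ('a \<times> 'a) set set" where
  "path_poset V E = {F. multipath V E F}"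

definition has_maximum :: "'b set set \<Rightarrow> bool" where
  "has_maximum P \<longleftrightarrow> (\<exists>M\<in>P. \<forall>F\<in>P. F \<subseteq> M)"

definition poset_iso :: "'b set set \<Rightarrow> 'c set set \<Rightarrow> bool" where
  "poset_iso P Q \<longleftrightarrow> (\<exists>f. bij_betw f P Q \<and> (\<forall>x\<in>P. \<forall>y\<in>P. x \<subseteq> y \<longleftrightarrow> f x \<subseteq> f y))"

definition boolean_B :: "nat \<Rightarrow> nat set set" where
  "boolean_B n = Pow {..<n}"

definition boolean_poset :: "'b set set \<Rightarrow> bool" where
  "boolean_poset P \<longleftrightarrow> (\<exists>A :: nat set. finite A \<and> poset_iso P (Pow A))"

definition I_V :: "nat \<Rightarrow> nat set" where
  "I_V n = {0..n}"

definition I_E :: "nat \<Rightarrow> (nat \<times> nat) set" where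
  "I_E n = {(i - 1, i) | i. 1 \<le> i \<and> i \<le> n}"

definition digraph_iso :: "'a set \<Rightarrow> ('a \<times> 'a) set \<Rightarrow> 'b set \<Rightarrow> ('b \<times> 'b) set \<Rightarrow> bool" where
  "digraph_iso V E W D \<longleftrightarrow>
     (\<exists>f. bij_betw f V W \<and> (\<forall>u\<in>V. \<forall>v\<in>V. (u, v) \<in> E \<longleftrightarrow> (f u, f v) \<in> D))"

end

theory Submission
  imports Defs
begin

lemma zip_tl_set: "set (zip xs (tl xs)) = {(xs!k, xs!Suc k) | k. Suc k < length xs}"
  by (auto simp: set_zip nth_tl)

lemma rt_sym: "(x,y) \<in> (F \<union> F\<inverse>)\<^sup>* \<Longrightarrow> (y,x) \<in> (F \<union> F\<inverse>)\<^sup>*"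
proof -
  assume "(x,y) \<in> (F \<union> F\<inverse>)\<^sup>*"
  hence "(y,x) \<in> ((F \<union> F\<inverse>)\<inverse>)\<^sup>*" by (rule rtrancl_converseI)
  thus ?thesis by (simp add: converse_Un Un_commute)
qed

lemma pc_intro:
  assumes inj: "inj_on g {l..r}" and lr: "l \<le> r" and C: "C = g ` {l..r}"
    and E: "{(a,b) \<in> F. a \<in> C \<and> b \<in> C} = {(g k, g (Suc k)) | k. l \<le> k \<and> k < r}"
  shows "path_component C F"
proof -
  define xs where "xs = map g [l..<Suc r]"
  have ne: "xs \<noteq> []" using lr by (simp add: xs_def)
  have di: "distinct xs" unfolding xs_def
    by (metis distinct_map distinct_upt set_upt atLeastLessThanSuc_atLeastAtMost inj)
  have se: "set xs = C" unfolding xs_def C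
    by (metis list.set_map set_upt atLeastLessThanSuc_atLeastAtMost)
  have len: "length xs = Suc r - l" using lr by (simp add: xs_def)
  have nth: "xs ! k = g (l + k)" if "k < Suc r - l" for k using that by (simp add: xs_def del: upt_Suc)
  have Z: "set (zip xs (tl xs)) = {(g k, g (Suc k)) | k. l \<le> k \<and> k < r}"
    unfolding zip_tl_set len
  proof (intro equalityI subsetI)
    fix p assume "p \<in> {(xs ! k, xs ! Suc k) |k. Suc k < Suc r - l}"
    then obtain k where k: "p = (xs ! k, xs ! Suc k)" "Suc k < Suc r - l" by blast
    have lk: "l \<le> l + k" "l + k < r" using k(2) by linarith+
    have "p = (g (l+k), g (Suc (l+k)))" using k nth[of k] nth[of "Suc k"] by simp
    then show "p \<in> {(g k, g (Suc k)) | k. l \<le> k \<and> k < r}" using lk by blast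
  next
    fix p assume "p \<in> {(g k, g (Suc k)) | k. l \<le> k \<and> k < r}"
    then obtain k where k: "p = (g k, g (Suc k))" "l \<le> k" "k < r" by blast
    have lk: "Suc (k - l) < Suc r - l" using k(2,3) by linarith
    have "xs ! (k - l) = g k" using nth[of "k - l"] k(2) lk by simp
    moreover have "xs ! Suc (k - l) = g (Suc k)" using nth[of "Suc (k - l)"] k(2) lk by simp
    ultimately have "p = (xs ! (k-l), xs ! Suc (k-l))" using k(1) by simp
    then show "p \<in> {(xs ! k, xs ! Suc k) |k. Suc k < Suc r - l}" using lk by blast
  qed
  show ?thesis unfolding path_component_def
  proof (intro exI[of _ xs] conjI)
    show "xs \<noteq> []" by (rule ne)
    show "distinct xs" by (rule di)
    show "set xs = C" by (rule se)
    show "{(a, b) \<in> F. a \<in> C \<and> b \<in> C} = set (zip xs (tl xs))" using E Z by simp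
  qed
qed

lemma subpath_pc:
  assumes dist: "distinct vs" and sub: "set vs \<subseteq> V" and FE: "F \<subseteq> set (zip vs (tl vs))"
    and u: "u \<in> V"
  shows "path_component (component V F u) F"
proof (cases "u \<in> set vs")
  case False
  have noedge: "(u, y) \<notin> F \<union> F\<inverse>" for y
    using FE False by (auto simp: zip_tl_set)
  have comp: "component V F u = {u}"
  proof
    show "component V F u \<subseteq> {u}"
    proof
      fix y assume "y \<in> component V F u"
      then have "(u,y) \<in> (F \<union> F\<inverse>)\<^sup>*" by (simp add: component_def)
      then show "y \<in> {u}" by (cases rule: converse_rtranclE) (use noedge in auto)
    qed
    show "{u} \<subseteq> component V F u" using u by (auto simp: component_def)
  qed
  have "{(a,b) \<in> F. a \<in> {u} \<and> b \<in> {u}} = {}" using noedge by auto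
  then show ?thesis unfolding comp path_component_def by (intro exI[of _ "[u]"]) auto
next
  case True
  then obtain i where i: "i < length vs" "u = vs!i" by (auto simp: in_set_conv_nth)
  define S where "S = {k. Suc k < length vs \<and> (vs!k, vs!Suc k) \<in> F}"
  have Sl: "Suc k < length vs" if "k \<in> S" for k using that unfolding S_def by simp
  have SF: "(vs!k, vs!Suc k) \<in> F" if "k \<in> S" for k using that unfolding S_def by simp
  have SI: "k \<in> S" if "(vs!k, vs!Suc k) \<in> F" "Suc k < length vs" for k
    using that unfolding S_def by simp
  have Fchar: "\<exists>k. k \<in> S \<and> p = (vs!k, vs!Suc k)" if "p \<in> F" for p
  proof -
    have "p \<in> set (zip vs (tl vs))" using that FE by blast
    then obtain k where k: "p = (vs!k, vs!Suc k)" "Suc k < length vs" unfolding zip_tl_set by blast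
    then have "k \<in> S" using SI that by blast
    then show ?thesis using k by blast
  qed
  define J where "J = {j. j < length vs \<and> (\<forall>k. i \<le> k \<and> k < j \<longrightarrow> k \<in> S)
                          \<and> (\<forall>k. j \<le> k \<and> k < i \<longrightarrow> k \<in> S)}"
  have Jl: "j < length vs" if "j \<in> J" for j using that unfolding J_def by blast
  have Ju: "k \<in> S" if "j \<in> J" "i \<le> k" "k < j" for j k using that unfolding J_def by blast
  have Jd: "k \<in> S" if "j \<in> J" "j \<le> k" "k < i" for j k using that unfolding J_def by blast
  have JI: "j \<in> J" if "j < length vs" "\<And>k. i \<le> k \<Longrightarrow> k < j \<Longrightarrow> k \<in> S"
     "\<And>k. j \<le> k \<Longrightarrow> k < i \<Longrightarrow> k \<in> S" for j
    using that unfolding J_def by blast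
  have iJ: "i \<in> J" using i by (intro JI) auto
  have reach: "(vs!a, vs!b) \<in> (F \<union> F\<inverse>)\<^sup>*"
    if "a \<le> b" "\<And>k. a \<le> k \<Longrightarrow> k < b \<Longrightarrow> k \<in> S" for a b
    using that
  proof (induction b)
    case 0 thus ?case by simp
  next
    case (Suc b)
    show ?case
    proof (cases "a = Suc b")
      case True thus ?thesis by simp
    next
      case False
      then have ab: "a \<le> b" using Suc.prems(1) by simp
      then have "(vs!a, vs!b) \<in> (F \<union> F\<inverse>)\<^sup>*" using Suc.IH Suc.prems(2) by simp
      moreover have "b \<in> S" using Suc.prems(2) ab by simp
      then have "(vs!b, vs!Suc b) \<in> F" by (rule SF)
      ultimately show ?thesis by (meson UnI1 rtrancl.rtrancl_into_rtrancl)
    qed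
  qed
  have c1: "(u, vs!j) \<in> (F \<union> F\<inverse>)\<^sup>*" if "j \<in> J" for j
  proof (cases "i \<le> j")
    case True thus ?thesis using reach[of i j] Ju[OF that] i(2) by blast
  next
    case False
    then have "(vs!j, vs!i) \<in> (F \<union> F\<inverse>)\<^sup>*" using reach[of j i] Jd[OF that] by simp
    then show ?thesis using rt_sym i(2) by metis
  qed
  have nth_eq: "vs!a = vs!b \<longleftrightarrow> a = b" if "a < length vs" "b < length vs" for a b
    using dist that nth_eq_iff_index_eq by blast
  have Jup: "Suc k \<in> J" if kJ: "k \<in> J" and kS: "k \<in> S" for k
  proof (rule JI)
    show "Suc k < length vs" using Sl[OF kS] .
    fix m
    show "m \<in> S" if "i \<le> m" "m < Suc k"
    proof (cases "m = k")
      case True thus ?thesis using kS by simp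
    next
      case False thus ?thesis using that Ju[OF kJ] by simp
    qed
    show "m \<in> S" if "Suc k \<le> m" "m < i" using that Jd[OF kJ] by simp
  qed
  have Jdown: "k \<in> J" if kJ: "Suc k \<in> J" and kS: "k \<in> S" for k
  proof (rule JI)
    show "k < length vs" using Sl[OF kS] by simp
    fix m
    show "m \<in> S" if "i \<le> m" "m < k" using that Ju[OF kJ] by simp
    show "m \<in> S" if "k \<le> m" "m < i"
    proof (cases "m = k")
      case True thus ?thesis using kS by simp
    next
      case False thus ?thesis using that Jd[OF kJ] by simp
    qed
  qed
  have c2: "y \<in> nth vs ` J" if jJ: "j \<in> J" and e: "(vs!j, y) \<in> F \<union> F\<inverse>" for j y
  proof -
    from e have "(vs!j, y) \<in> F \<or> (y, vs!j) \<in> F" by blast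
    then obtain k where k: "k \<in> S"
      "(vs!j, y) = (vs!k, vs!Suc k) \<or> (y, vs!j) = (vs!k, vs!Suc k)" using Fchar by blast
    have kl: "Suc k < length vs" using Sl[OF k(1)] .
    have jl: "j < length vs" using Jl[OF jJ] .
    from k(2) show ?thesis
    proof
      assume a: "(vs!j, y) = (vs!k, vs!Suc k)"
      then have "j = k" using nth_eq[of j k] kl jl by simp
      moreover have "y = vs!Suc k" using a by simp
      moreover have "Suc k \<in> J" using Jup jJ \<open>j = k\<close> k(1) by simp
      ultimately show ?thesis by blast
    next
      assume a: "(y, vs!j) = (vs!k, vs!Suc k)"
      then have "j = Suc k" using nth_eq[of j "Suc k"] kl jl by simp
      moreover have "y = vs!k" using a by simp
      moreover have "k \<in> J" using Jdown jJ \<open>j = Suc k\<close> k(1) by simp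
      ultimately show ?thesis by blast
    qed
  qed
  have compC: "component V F u = nth vs ` J"
  proof
    show "component V F u \<subseteq> nth vs ` J"
    proof
      fix y assume "y \<in> component V F u"
      then have "(u,y) \<in> (F \<union> F\<inverse>)\<^sup>*" by (simp add: component_def)
      then show "y \<in> nth vs ` J"
      proof (induction rule: rtrancl_induct)
        case base thus ?case using iJ i(2) by blast
      next
        case (step y z)
        then obtain j where "j \<in> J" "y = vs!j" by blast
        then show ?case using c2 step(2) by blast
      qed
    qed
    show "nth vs ` J \<subseteq> component V F u"
    proof
      fix y assume "y \<in> nth vs ` J"
      then obtain j where j: "j \<in> J" "y = vs!j" by blast
      then have "y \<in> V" using Jl[OF j(1)] sub nth_mem by blast
      then show "y \<in> component V F u" using c1[OF j(1)] j(2) unfolding component_def by blast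
    qed
  qed
  have Jfin: "finite J" using Jl by (meson finite_lessThan finite_subset lessThan_iff subsetI)
  define l where "l = Min J"
  define r where "r = Max J"
  have convex: "j \<in> J" if aJ: "a \<in> J" and bJ: "b \<in> J" and "a \<le> j" "j \<le> b" for a b j
  proof (rule JI)
    show "j < length vs" using Jl[OF bJ] \<open>j \<le> b\<close> by simp
    fix m
    show "m \<in> S" if "i \<le> m" "m < j" using that Ju[OF bJ] \<open>j \<le> b\<close> by simp
    show "m \<in> S" if "j \<le> m" "m < i" using that Jd[OF aJ] \<open>a \<le> j\<close> by simp
  qed
  have Jne: "J \<noteq> {}" using iJ by blast
  have lJ: "l \<in> J" unfolding l_def by (rule Min_in[OF Jfin Jne])
  have rJ: "r \<in> J" unfolding r_def by (rule Max_in[OF Jfin Jne])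
  have Jeq: "J = {l..r}"
  proof (intro equalityI subsetI)
    fix j assume j: "j \<in> J"
    have "l \<le> j" unfolding l_def by (rule Min_le[OF Jfin j])
    moreover have "j \<le> r" unfolding r_def by (rule Max_ge[OF Jfin j])
    ultimately show "j \<in> {l..r}" by simp
  next
    fix j assume "j \<in> {l..r}"
    then have "l \<le> j" "j \<le> r" by simp_all
    then show "j \<in> J" by (rule convex[OF lJ rJ])
  qed
  have lr: "l \<le> r" unfolding l_def by (rule Min_le[OF Jfin rJ])
  have rl: "r < length vs" using Jl[OF rJ] .
  have edges: "{(a,b) \<in> F. a \<in> nth vs ` J \<and> b \<in> nth vs ` J} = {(vs!k, vs!Suc k) | k. l \<le> k \<and> k < r}"
  proof (intro equalityI subsetI)
    fix p assume p: "p \<in> {(a,b) \<in> F. a \<in> nth vs ` J \<and> b \<in> nth vs ` J}"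
    then have pF: "p \<in> F" by blast
    then obtain k where k: "k \<in> S" "p = (vs!k, vs!Suc k)" using Fchar by blast
    have kl: "Suc k < length vs" using Sl[OF k(1)] .
    have pJ: "vs!k \<in> nth vs ` J" "vs!Suc k \<in> nth vs ` J" using p k(2) by simp_all
    obtain j1 where j1': "vs!k = vs!j1" "j1 \<in> J" using pJ(1) by (rule imageE)
    obtain j2 where j2': "vs!Suc k = vs!j2" "j2 \<in> J" using pJ(2) by (rule imageE)
    note j1 = j1'(2,1)
    note j2 = j2'(2,1)
    have "j1 = k" using j1 nth_eq[of k j1] kl Jl[OF j1(1)] by simp
    moreover have "j2 = Suc k" using j2 nth_eq[of "Suc k" j2] kl Jl[OF j2(1)] by simp
    ultimately have "k \<in> {l..r}" "Suc k \<in> {l..r}" using j1(1) j2(1) Jeq by simp_all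
    then have "l \<le> k" "k < r" by simp_all
    then show "p \<in> {(vs!k, vs!Suc k) | k. l \<le> k \<and> k < r}" using k(2) by blast
  next
    fix p assume "p \<in> {(vs!k, vs!Suc k) | k. l \<le> k \<and> k < r}"
    then obtain k where k: "p = (vs!k, vs!Suc k)" "l \<le> k" "k < r" by blast
    have kJ: "k \<in> J" "Suc k \<in> J" unfolding Jeq using k(2,3) by simp_all
    have "k \<in> S"
    proof (cases "i \<le> k")
      case True thus ?thesis using Ju[OF kJ(2)] by simp
    next
      case False thus ?thesis using Jd[OF kJ(1)] by simp
    qed
    then have "(vs!k, vs!Suc k) \<in> F" by (rule SF)
    moreover have "vs!k \<in> nth vs ` J" by (rule imageI[OF kJ(1)])
    moreover have "vs!Suc k \<in> nth vs ` J" by (rule imageI[OF kJ(2)])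
    ultimately show "p \<in> {(a,b) \<in> F. a \<in> nth vs ` J \<and> b \<in> nth vs ` J}"
      using k(1) by simp
  qed
  show ?thesis unfolding compC
  proof (rule pc_intro[where g="nth vs" and l=l and r=r])
    show "inj_on (nth vs) {l..r}" using dist rl by (intro inj_on_nth) auto
    show "l \<le> r" by (rule lr)
    show "nth vs ` J = nth vs ` {l..r}" using Jeq by simp
    show "{(a,b) \<in> F. a \<in> nth vs ` J \<and> b \<in> nth vs ` J} = {(vs!k, vs!Suc k) | k. l \<le> k \<and> k < r}"
      by (rule edges)
  qed
qed


lemma singleton_mp:
  assumes g: "digraph V E" and e: "(a,b) \<in> E"
  shows "multipath V E {(a,b)}"
  unfolding multipath_def
proof (intro conjI ballI)
  show "{(a,b)} \<subseteq> E" using e by simp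
  fix u assume u: "u \<in> V"
  have "a \<noteq> b" using g e unfolding digraph_def by auto
  moreover have "a \<in> V" "b \<in> V" using g e unfolding digraph_def by auto
  ultimately show "path_component (component V {(a,b)} u) {(a,b)}"
    using u by (intro subpath_pc[where vs="[a,b]"]) auto
qed

lemma path_pow:
  assumes "distinct vs" "set vs = V" "E = set (zip vs (tl vs))"
  shows "path_poset V E = Pow E"
proof
  show "path_poset V E \<subseteq> Pow E" unfolding path_poset_def multipath_def by auto
  show "Pow E \<subseteq> path_poset V E"
  proof
    fix F assume "F \<in> Pow E"
    then show "F \<in> path_poset V E" unfolding path_poset_def multipath_def
      using assms subpath_pc[of vs V F] by auto
  qed
qed

lemma max_path:
  assumes g: "digraph V E" and c: "connected_digraph V E" and m: "has_maximum (path_poset V E)"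
  shows "\<exists>vs. distinct vs \<and> set vs = V \<and> E = set (zip vs (tl vs))"
proof -
  obtain M where M: "multipath V E M" "\<And>F. multipath V E F \<Longrightarrow> F \<subseteq> M"
    using m unfolding has_maximum_def path_poset_def by auto
  have "E \<subseteq> M"
  proof
    fix e assume "e \<in> E"
    then obtain a b where "e = (a,b)" "(a,b) \<in> E" by (cases e) auto
    then show "e \<in> M" using M(2)[OF singleton_mp[OF g]] by auto
  qed
  moreover have "M \<subseteq> E" using M(1) unfolding multipath_def by auto
  ultimately have ME: "M = E" by auto
  obtain u where u: "u \<in> V" using c unfolding connected_digraph_def by auto
  have comp: "component V E u = V" using c u unfolding connected_digraph_def component_def by auto
  have "path_component V E" using M(1) ME u comp unfolding multipath_def by metis
  then obtain vs where vs: "distinct vs" "set vs = V" "{(a, b) \<in> E. a \<in> V \<and> b \<in> V} = set (zip vs (tl vs))"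
    unfolding path_component_def by auto
  have "{(a, b) \<in> E. a \<in> V \<and> b \<in> V} = E" using g unfolding digraph_def by auto
  then show ?thesis using vs by auto
qed

lemma iso_from_inv:
  assumes b: "bij_betw g W V" and e: "\<forall>i\<in>W. \<forall>j\<in>W. (i,j) \<in> D \<longleftrightarrow> (g i, g j) \<in> E"
  shows "digraph_iso V E W D"
  unfolding digraph_iso_def
proof (intro exI conjI ballI)
  let ?f = "the_inv_into W g"
  show bf: "bij_betw ?f V W" using b by (rule bij_betw_the_inv_into)
  fix u v assume u: "u \<in> V" and v: "v \<in> V"
  have "g (?f u) = u" "g (?f v) = v" using b u v by (auto intro: f_the_inv_into_f_bij_betw)
  moreover have "?f u \<in> W" "?f v \<in> W" using bf u v by (auto simp: bij_betw_def)
  ultimately show "(u, v) \<in> E \<longleftrightarrow> (?f u, ?f v) \<in> D" using e by metis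
qed

lemma path_iso:
  assumes d: "distinct vs" and s: "set vs = V" and E: "E = set (zip vs (tl vs))"
    and n: "card E = n" and ne: "V \<noteq> {}"
  shows "poset_iso (path_poset V E) (boolean_B n) \<and> digraph_iso V E (I_V n) (I_E n)"
proof
  have "card E = length vs - 1" unfolding E
    by (subst distinct_card[OF distinct_zipI1[OF d]]) simp
  moreover have "vs \<noteq> []" using s ne by auto
  ultimately have len: "length vs = Suc n" using n by auto
  have fin: "finite E" unfolding E by simp
  obtain h where h: "bij_betw h E {..<n}" using finite_same_card_bij[OF fin, of "{..<n}"] n by auto
  have inj: "inj_on h E" using h by (simp add: bij_betw_def)
  show "poset_iso (path_poset V E) (boolean_B n)"
    unfolding poset_iso_def path_pow[OF d s E] boolean_B_def
  proof (intro exI conjI ballI)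
    show "bij_betw (image h) (Pow E) (Pow {..<n})" using h by (rule bij_betw_Pow)
    fix x y assume xE: "x \<in> Pow E" and yE: "y \<in> Pow E"
    show "x \<subseteq> y \<longleftrightarrow> h ` x \<subseteq> h ` y"
    proof
      assume "x \<subseteq> y" thus "h ` x \<subseteq> h ` y" by (rule image_mono)
    next
      assume hxy: "h ` x \<subseteq> h ` y"
      show "x \<subseteq> y"
      proof
        fix z assume z: "z \<in> x"
        then have "h z \<in> h ` y" using hxy by blast
        then obtain w where w: "h z = h w" "w \<in> y" by (rule imageE)
        have "z \<in> E" "w \<in> E" using z w(2) xE yE by blast+
        then have "z = w" using inj_onD[OF inj w(1)] by blast
        then show "z \<in> y" using w(2) by simp
      qed
    qed
  qed
  have bn: "bij_betw (nth vs) (I_V n) V"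
    using d s len by (intro bij_betw_nth) (auto simp: I_V_def)
  have nth_eq: "vs!a = vs!b \<longleftrightarrow> a = b" if "a < length vs" "b < length vs" for a b
    using d that nth_eq_iff_index_eq by blast
  show "digraph_iso V E (I_V n) (I_E n)"
  proof (rule iso_from_inv[OF bn], intro ballI)
    fix i j assume i: "i \<in> I_V n" and j: "j \<in> I_V n"
    have il: "i < length vs" "j < length vs" using i j len by (auto simp: I_V_def)
    have "(vs!i, vs!j) \<in> E \<longleftrightarrow> j = Suc i"
    proof
      assume "(vs!i, vs!j) \<in> E"
      then obtain k where k: "vs!i = vs!k" "vs!j = vs!Suc k" "Suc k < length vs"
        unfolding E zip_tl_set by blast
      have "i = k" using nth_eq[of i k] il k(1,3) by simp
      moreover have "j = Suc k" using nth_eq[of j "Suc k"] il k(2,3) by simp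
      ultimately show "j = Suc i" by simp
    next
      assume ji: "j = Suc i"
      then have "Suc i < length vs" using il by simp
      then show "(vs!i, vs!j) \<in> E" unfolding E zip_tl_set ji by blast
    qed
    moreover have "(i, j) \<in> I_E n \<longleftrightarrow> j = Suc i" using i j unfolding I_E_def I_V_def by auto
    ultimately show "(i, j) \<in> I_E n \<longleftrightarrow> (vs!i, vs!j) \<in> E" by simp
  qed
qed

lemma iso_to_path:
  assumes g: "digraph V E" and iso: "digraph_iso V E (I_V m) (I_E m)"
  shows "\<exists>vs. distinct vs \<and> set vs = V \<and> E = set (zip vs (tl vs))"
proof -
  obtain f where f: "bij_betw f V {0..m}" and fe: "\<forall>u\<in>V. \<forall>v\<in>V. (u, v) \<in> E \<longleftrightarrow> (f u, f v) \<in> I_E m"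
    using iso unfolding digraph_iso_def I_V_def by auto
  define g' where "g' = the_inv_into V f"
  have bg: "bij_betw g' {0..m} V" unfolding g'_def using f by (rule bij_betw_the_inv_into)
  have fg: "f (g' k) = k" if "k \<le> m" for k
    unfolding g'_def using f that by (auto intro: f_the_inv_into_f_bij_betw)
  have gf: "g' (f u) = u" if "u \<in> V" for u
    unfolding g'_def using f that by (auto simp: bij_betw_def the_inv_into_f_f)
  have gV: "g' k \<in> V" if "k \<le> m" for k using bg that by (auto simp: bij_betw_def)
  have fV: "f u \<le> m" if "u \<in> V" for u using f that by (auto simp: bij_betw_def)
  define vs where "vs = map g' [0..<Suc m]"
  have "distinct vs" unfolding vs_def using bg
    by (metis bij_betw_def distinct_map distinct_upt set_upt atLeastLessThanSuc_atLeastAtMost)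
  moreover have "set vs = V" unfolding vs_def using bg
    by (metis bij_betw_def list.set_map set_upt atLeastLessThanSuc_atLeastAtMost)
  moreover have "E = set (zip vs (tl vs))"
  proof (intro equalityI subsetI)
    fix p assume p: "p \<in> E"
    then obtain a b where ab: "p = (a,b)" "a \<in> V" "b \<in> V" using g unfolding digraph_def by auto
    then have "(f a, f b) \<in> I_E m" using fe p by auto
    then have "f b = Suc (f a)" "f b \<le> m" unfolding I_E_def by auto
    then have fb: "f b = Suc (f a)" "Suc (f a) \<le> m" by simp_all
    have vn: "vs ! k = g' k" if "k \<le> m" for k using that by (simp add: vs_def del: upt_Suc)
    have "a = vs ! (f a)" using gf[OF ab(2)] vn fb(2) by simp
    moreover have "b = vs ! Suc (f a)" using gf[OF ab(3)] vn[of "Suc (f a)"] fb by simp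
    moreover have "Suc (f a) < length vs" using fb(2) by (simp add: vs_def)
    ultimately have "\<exists>k. p = (vs!k, vs!Suc k) \<and> Suc k < length vs" using ab(1) by blast
    then show "p \<in> set (zip vs (tl vs))" unfolding zip_tl_set by blast
  next
    fix p assume "p \<in> set (zip vs (tl vs))"
    then obtain k where k: "p = (g' k, g' (Suc k))" "k < m" unfolding zip_tl_set vs_def
      by (auto simp del: upt_Suc)
    have "(k, Suc k) \<in> I_E m" unfolding I_E_def using k by force
    then show "p \<in> E" using fe k gV fg
      by (metis Suc_leI less_imp_le_nat)
  qed
  ultimately show ?thesis by blast
qed

lemma bool_max: "boolean_poset P \<Longrightarrow> has_maximum P"
proof -
  assume "boolean_poset P"
  then obtain A :: "nat set" and h where h: "bij_betw h P (Pow A)"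
    and o: "\<forall>x\<in>P. \<forall>y\<in>P. x \<subseteq> y \<longleftrightarrow> h x \<subseteq> h y"
    unfolding boolean_poset_def poset_iso_def by auto
  obtain M where M: "M \<in> P" "h M = A" using h unfolding bij_betw_def by (metis Pow_top imageE)
  have "\<forall>F\<in>P. F \<subseteq> M"
  proof
    fix F assume F: "F \<in> P"
    then have "h F \<subseteq> A" using h unfolding bij_betw_def by auto
    then show "F \<subseteq> M" using o F M by auto
  qed
  then show ?thesis unfolding has_maximum_def using M by auto
qed

theorem proposition2p34:
  fixes V :: "'a set" and E :: "('a \<times> 'a) set" and n :: nat
  assumes "digraph V E" and "connected_digraph V E" and "card E = n"
  shows "(has_maximum (path_poset V E) \<longrightarrow>
            poset_iso (path_poset V E) (boolean_B n) \<and> digraph_iso V E (I_V n) (I_E n))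
         \<and> (boolean_poset (path_poset V E) \<longleftrightarrow> (\<exists>m. digraph_iso V E (I_V m) (I_E m)))"
proof -
  have ne: "V \<noteq> {}" using assms(2) unfolding connected_digraph_def by auto
  have part1: "poset_iso (path_poset V E) (boolean_B n) \<and> digraph_iso V E (I_V n) (I_E n)"
    if "has_maximum (path_poset V E)"
    using max_path[OF assms(1,2) that] path_iso assms(3) ne by blast
  have part2: "boolean_poset (path_poset V E)" if "\<exists>m. digraph_iso V E (I_V m) (I_E m)"
  proof -
    from that obtain m where "digraph_iso V E (I_V m) (I_E m)" by auto
    then obtain vs where vs: "distinct vs" "set vs = V" "E = set (zip vs (tl vs))"
      using iso_to_path[OF assms(1)] by blast
    have "has_maximum (path_poset V E)"
      unfolding path_pow[OF vs] has_maximum_def by auto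
    then have "poset_iso (path_poset V E) (boolean_B n)" using part1 by blast
    then show ?thesis unfolding boolean_poset_def boolean_B_def by blast
  qed
  show ?thesis using part1 part2 bool_max by blast
qed

end
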